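(* Let $S=(w_1,\ldots,w_{3m})$ be a list of $3m$ positive integers and let $b$ be an integer. If there is a partition of $\{1,\ldots,3m\}$ into $m$ sets $S_1,\ldots,S_m$ with $\sum_{i\in S_j}w_i=b$ for each $j$, then the graph $G(S,b)$ has a path decomposition of width at most $4$ and length at most $l=1-2m+2\sum_{i=1}^{3m}w_i$.
   Context: A path decomposition of a graph $G$ is a sequence $(X_1,\ldots,X_l)$ of subsets of $V(G)$ covering $V(G)$, such that every edge lies in some $X_i$, and $X_i\cap X_k\subseteq X_j$ whenever $i\leq j\leq k$; width is $\max_i|X_i|-1$, length is $l$. Construction of $G(S,b)$: for each $i\in\{1,\ldots,3m\}$ build $H_i$ from $w_i$ disjoint copies $K_3^{i,1},\ldots,K_3^{i,w_i}$ of $K_3$ and $w_i-1$ disjoint copies $K_4^{i,1},\ldots,K_4^{i,w_i-1}$ of $K_4$ by identifying, for each $q=1,\ldots,w_i-1$, two distinct vertices of $K_4^{i,q}$ with a vertex of $K_3^{i,q}$ and with a vertex of $K_3^{i,q+1}$ respectively, done so that each vertex of each $K_3^{i,q}$ is identified with at most one vertex from other cliques (a chain alternating triangles and $K_4$'s). Build $H_{m,b}$ from $m+1$ disjoint copies $K_5^1,\ldots,K_5^{m+1}$ of $K_5$ and $m$ disjoint copies $P_b^1,\ldots,P_b^m$ of the path with $b$ edges, by identifying, for each $j=1,\ldots,m$, one endpoint of $P_b^j$ with a vertex of $K_5^j$ and the other endpoint with a vertex of $K_5^{j+1}$, such that no vertex of any $K_5^j$ is identified with endpoints of two different paths. $G(S,b)$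 is the disjoint union of $H_1,\ldots,H_{3m}$ and $H_{m,b}$. *)

theory Defs
  imports Main
begin

definition is_path_decomposition :: "'v set \<Rightarrow> 'v set set \<Rightarrow> 'v set list \<Rightarrow> bool" where
  "is_path_decomposition V E Xs \<longleftrightarrow>
     (\<forall>X\<in>set Xs. X \<subseteq> V) \<and>
     \<Union>(set Xs) = V \<and>
     (\<forall>e\<in>E. \<exists>X\<in>set Xs. e \<subseteq> X) \<and>
     (\<forall>i j k. i \<le> j \<and> j \<le> k \<and> k < length Xs \<longrightarrow> Xs ! i \<inter> Xs ! k \<subseteq> Xs ! j)"

definition pd_width :: "'v set list \<Rightarrow> int" where
  "pd_width Xs = (MAX X\<in>set Xs. int (card X)) - 1"

definition clique_edges :: "'v set \<Rightarrow> 'v set set" where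
  "clique_edges K = {{x, y} | x y. x \<in> K \<and> y \<in> K \<and> x \<noteq> y}"

text \<open>Vertices: T i q r = vertex r (r<3) of triangle K3^{i,q};
  F i q r = the two private vertices (r<2) of K4^{i,q};
  C j k = vertex k (k<5) of K5^j; P j t = internal vertex t of path P_b^j.\<close>
datatype vert = T nat nat nat | F nat nat nat | C nat nat | P nat nat

definition tri :: "nat \<Rightarrow> nat \<Rightarrow> vert set" where
  "tri i q = {T i q 0, T i q 1, T i q 2}"

text \<open>K4^{i,q}: identified with vertex 1 of K3^{i,q} and vertex 0 of K3^{i,q+1}\<close>
definition k4 :: "nat \<Rightarrow> nat \<Rightarrow> vert set" where
  "k4 i q = {T i q 1, T i (Suc q) 0, F i q 0, F i q 1}"

definition k5 :: "nat \<Rightarrow> vert set" where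
  "k5 j = {C j k | k. k < 5}"

text \<open>the t-th vertex (0 \<le> t \<le> b) of path P_b^j, endpoints identified with
  vertex 1 of K5^j and vertex 0 of K5^{j+1}\<close>
definition pathv :: "nat \<Rightarrow> nat \<Rightarrow> nat \<Rightarrow> vert" where
  "pathv b j t = (if t = 0 then C j 1 else if t = b then C (Suc j) 0 else P j t)"

definition path_verts :: "nat \<Rightarrow> nat \<Rightarrow> vert set" where
  "path_verts b j = pathv b j ` {0..b}"

definition path_edges :: "nat \<Rightarrow> nat \<Rightarrow> vert set set" where
  "path_edges b j = {{pathv b j t, pathv b j (Suc t)} | t. t < b}"

definition H_verts :: "(nat \<Rightarrow> nat) \<Rightarrow> nat \<Rightarrow> vert set" where
  "H_verts w i = (\<Union>q\<in>{1..w i}. tri i q) \<union> (\<Union>q\<in>{1..<w i}. k4 i q)"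

definition H_edges :: "(nat \<Rightarrow> nat) \<Rightarrow> nat \<Rightarrow> vert set set" where
  "H_edges w i = (\<Union>q\<in>{1..w i}. clique_edges (tri i q)) \<union> (\<Union>q\<in>{1..<w i}. clique_edges (k4 i q))"

definition Hmb_verts :: "nat \<Rightarrow> nat \<Rightarrow> vert set" where
  "Hmb_verts m b = (\<Union>j\<in>{1..m+1}. k5 j) \<union> (\<Union>j\<in>{1..m}. path_verts b j)"

definition Hmb_edges :: "nat \<Rightarrow> nat \<Rightarrow> vert set set" where
  "Hmb_edges m b = (\<Union>j\<in>{1..m+1}. clique_edges (k5 j)) \<union> (\<Union>j\<in>{1..m}. path_edges b j)"

text \<open>G(S,b) for S = (w 1, ..., w (3m)); the path has nat b edges\<close>
definition G_verts :: "nat \<Rightarrow> (nat \<Rightarrow> nat) \<Rightarrow> int \<Rightarrow> vert set" where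
  "G_verts m w b = (\<Union>i\<in>{1..3*m}. H_verts w i) \<union> Hmb_verts m (nat b)"

definition G_edges :: "nat \<Rightarrow> (nat \<Rightarrow> nat) \<Rightarrow> int \<Rightarrow> vert set set" where
  "G_edges m w b = (\<Union>i\<in>{1..3*m}. H_edges w i) \<union> Hmb_edges m (nat b)"

end

theory Submission
  imports Defs
begin

definition RI :: "'a set list \<Rightarrow> bool" where
 "RI Xs \<longleftrightarrow> (\<forall>i j k. i \<le> j \<and> j \<le> k \<and> k < length Xs \<longrightarrow> Xs!i \<inter> Xs!k \<subseteq> Xs!j)"

lemma RI_le2: "length Xs \<le> 2 \<Longrightarrow> RI Xs"
  unfolding RI_def
proof (intro allI impI)
  fix i j k assume "length Xs \<le> 2" "i \<le> j \<and> j \<le> k \<and> k < length Xs"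
  then have "j = i \<or> j = k" by linarith
  then show "Xs ! i \<inter> Xs ! k \<subseteq> Xs ! j" by auto
qed

lemma RI_append:
  assumes "RI Xs" "RI Ys" "Xs \<noteq> []" "Ys \<noteq> []"
    and cond: "\<And>v. v \<in> \<Union>(set Xs) \<Longrightarrow> v \<in> \<Union>(set Ys) \<Longrightarrow> v \<in> last Xs \<and> v \<in> hd Ys"
  shows "RI (Xs @ Ys)"
  unfolding RI_def
proof (intro allI impI subsetI)
  fix i j k v
  assume ijk: "i \<le> j \<and> j \<le> k \<and> k < length (Xs @ Ys)" and v: "v \<in> (Xs @ Ys) ! i \<inter> (Xs @ Ys) ! k"
  let ?l = "length Xs"
  show "v \<in> (Xs @ Ys) ! j"
  proof (cases "k < ?l")
    case True
    then show ?thesis using assms(1) ijk v unfolding RI_def by (auto simp: nth_append)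
  next
    case kge: False
    show ?thesis
    proof (cases "i \<ge> ?l")
      case True
      have "i - ?l \<le> j - ?l" "j - ?l \<le> k - ?l" "k - ?l < length Ys" using ijk True by auto
      then have "Ys ! (i - ?l) \<inter> Ys ! (k - ?l) \<subseteq> Ys ! (j - ?l)"
        using assms(2) unfolding RI_def by blast
      then show ?thesis using True ijk v by (auto simp: nth_append)
    next
      case ilt: False
      have vx: "v \<in> Xs ! i" using v ilt by (auto simp: nth_append)
      have vy: "v \<in> Ys ! (k - ?l)" using v kge by (auto simp: nth_append)
      have "v \<in> \<Union>(set Xs)" using vx ilt by auto
      moreover have "v \<in> \<Union>(set Ys)" using vy kge ijk by auto
      ultimately have lh: "v \<in> last Xs" "v \<in> hd Ys" using cond by auto
      have lx: "last Xs = Xs ! (?l - 1)" using assms(3) by (simp add: last_conv_nth)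
      have hy: "hd Ys = Ys ! 0" using assms(4) by (simp add: hd_conv_nth)
      show ?thesis
      proof (cases "j < ?l")
        case True
        have "j \<le> ?l - 1" "?l - 1 < ?l" using True by auto
        then have "Xs ! i \<inter> Xs ! (?l - 1) \<subseteq> Xs ! j"
          using assms(1) ijk unfolding RI_def by blast
        then show ?thesis using vx lh lx True by (auto simp: nth_append)
      next
        case False
        have "0 \<le> j - ?l" "j - ?l \<le> k - ?l" "k - ?l < length Ys" using ijk False by auto
        then have "Ys ! 0 \<inter> Ys ! (k - ?l) \<subseteq> Ys ! (j - ?l)"
          using assms(2) unfolding RI_def by blast
        then show ?thesis using vy lh hy False by (auto simp: nth_append)
      qed
    qed
  qed
qed

fun hb :: "nat \<Rightarrow> (nat \<Rightarrow> vert) \<Rightarrow> nat \<Rightarrow> nat \<Rightarrow> nat \<Rightarrow> vert set list" where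
  "hb i p q s 0 = []"
| "hb i p q s (Suc 0) = [tri i q \<union> {p s, p (Suc s)}]"
| "hb i p q s (Suc (Suc n)) = [tri i q \<union> {p s, p (Suc s)}, k4 i q \<union> {p (Suc s)}] @ hb i p (Suc q) (Suc s) (Suc n)"

lemma hb_ne: "hb i p q s (Suc n) \<noteq> []" by (cases n) auto

lemma hb_hd: "hd (hb i p q s (Suc n)) = tri i q \<union> {p s, p (Suc s)}" by (cases n) auto

lemma hb_last: "p (s + Suc n) \<in> last (hb i p q s (Suc n))"
proof (induction n arbitrary: q s)
  case 0 then show ?case by simp
next
  case (Suc n)
  then show ?case using hb_ne[of i p "Suc q" "Suc s" n] Suc.IH[of "Suc s" "Suc q"] by simp
qed

lemma hb_len: "length (hb i p q s (Suc n)) = 2 * n + 1"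
  by (induction n arbitrary: q s) auto

lemma hb_union: "\<Union>(set (hb i p q s (Suc n))) =
   (\<Union>q'\<in>{q..q+n}. tri i q') \<union> (\<Union>q'\<in>{q..<q+n}. k4 i q') \<union> p ` {s..s + Suc n}"
proof (induction n arbitrary: q s)
  case 0
  have "{s..Suc s} = {s, Suc s}" by auto
  then show ?case by simp
next
  case (Suc n)
  have e1: "{q..q + Suc n} = insert q {Suc q..Suc q + n}" by auto
  have e2: "{q..<q + Suc n} = insert q {Suc q..<Suc q + n}" by auto
  have e3: "{s..s + Suc (Suc n)} = insert s {Suc s..Suc s + Suc n}" by auto
  have e4: "p (Suc s) \<in> p ` {Suc s..Suc s + Suc n}" by auto
  have "\<Union>(set (hb i p q s (Suc (Suc n)))) = tri i q \<union> {p s, p (Suc s)} \<union> (k4 i q \<union> {p (Suc s)}) \<union> \<Union>(set (hb i p (Suc q) (Suc s) (Suc n)))"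
    by auto
  also have "\<dots> = tri i q \<union> {p s, p (Suc s)} \<union> (k4 i q \<union> {p (Suc s)}) \<union> ((\<Union>q'\<in>{Suc q..Suc q+n}. tri i q') \<union> (\<Union>q'\<in>{Suc q..<Suc q+n}. k4 i q') \<union> p ` {Suc s..Suc s + Suc n})"
    using Suc.IH by simp
  also have "\<dots> = (tri i q \<union> (\<Union>q'\<in>{Suc q..Suc q+n}. tri i q')) \<union> (k4 i q \<union> (\<Union>q'\<in>{Suc q..<Suc q+n}. k4 i q')) \<union> insert (p s) (insert (p (Suc s)) (p ` {Suc s..Suc s + Suc n}))"
    by blast
  also have "\<dots> = (tri i q \<union> (\<Union>q'\<in>{Suc q..Suc q+n}. tri i q')) \<union> (k4 i q \<union> (\<Union>q'\<in>{Suc q..<Suc q+n}. k4 i q')) \<union> insert (p s) (p ` {Suc s..Suc s + Suc n})"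
    using e4 by (simp add: insert_absorb)
  finally show ?case unfolding e1 e2 e3 by (simp only: image_insert Union_insert)
qed

lemma card5: "card {a,b,c,d,e::'a} \<le> 5"
  using card_length[of "[a,b,c,d,e]"] by simp

lemma hb_card: "X \<in> set (hb i p q s n) \<Longrightarrow> card X \<le> 5"
proof (induction i p q s n rule: hb.induct)
  case (2 i p q s)
  then have "X = {T i q 0, T i q 1, T i q 2, p s, p (Suc s)}" by (auto simp: tri_def)
  then show ?case using card5 by simp
next
  case (3 i p q s n)
  have "X = {T i q 0, T i q 1, T i q 2, p s, p (Suc s)} \<or> X = {T i q 1, T i (Suc q) 0, F i q 0, F i q 1, p (Suc s)} \<or> X \<in> set (hb i p (Suc q) (Suc s) (Suc n))"
    using 3(2) by (auto simp: tri_def k4_def)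
  then show ?case using card5 3(1) by metis
qed auto

lemma hb_tri: "q' \<in> {q..q+n} \<Longrightarrow> \<exists>X\<in>set (hb i p q s (Suc n)). tri i q' \<subseteq> X"
proof (induction n arbitrary: q s)
  case 0 then show ?case by auto
next
  case (Suc n)
  show ?case
  proof (cases "q' = q")
    case True then show ?thesis by auto
  next
    case False
    then have "q' \<in> {Suc q..Suc q+n}" using Suc.prems by auto
    then show ?thesis using Suc.IH by fastforce
  qed
qed

lemma hb_k4: "q' \<in> {q..<q+n} \<Longrightarrow> \<exists>X\<in>set (hb i p q s (Suc n)). k4 i q' \<subseteq> X"
proof (induction n arbitrary: q s)
  case 0 then show ?case by auto
next
  case (Suc n)
  show ?case
  proof (cases "q' = q")
    case True then show ?thesis by auto
  next
    case False
    then have "q' \<in> {Suc q..<Suc q+n}" using Suc.prems by auto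
    then show ?thesis using Suc.IH by fastforce
  qed
qed

lemma hb_edge: "t \<in> {s..s+n} \<Longrightarrow> \<exists>X\<in>set (hb i p q s (Suc n)). {p t, p (Suc t)} \<subseteq> X"
proof (induction n arbitrary: q s)
  case 0 then show ?case by auto
next
  case (Suc n)
  show ?case
  proof (cases "t = s")
    case True then show ?thesis by auto
  next
    case False
    then have "t \<in> {Suc s..Suc s+n}" using Suc.prems by auto
    then show ?thesis using Suc.IH by fastforce
  qed
qed

lemma hb_RI:
  assumes "inj_on p {s..s + Suc n}" "\<And>t a b c. p t \<noteq> T a b c" "\<And>t a b c. p t \<noteq> F a b c"
  shows "RI (hb i p q s (Suc n))"
  using assms(1)
proof (induction n arbitrary: q s)
  case 0 then show ?case by (simp add: RI_le2)
next
  case (Suc n)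
  have inj: "inj_on p {Suc s..Suc s + Suc n}" using Suc.prems by (rule inj_on_subset) auto
  have "RI ([tri i q \<union> {p s, p (Suc s)}, k4 i q \<union> {p (Suc s)}] @ hb i p (Suc q) (Suc s) (Suc n))"
  proof (rule RI_append)
    show "RI [tri i q \<union> {p s, p (Suc s)}, k4 i q \<union> {p (Suc s)}]" by (simp add: RI_le2)
    show "RI (hb i p (Suc q) (Suc s) (Suc n))" using Suc.IH inj by blast
    show "hb i p (Suc q) (Suc s) (Suc n) \<noteq> []" by (rule hb_ne)
    show "[tri i q \<union> {p s, p (Suc s)}, k4 i q \<union> {p (Suc s)}] \<noteq> []" by simp
  next
    fix v assume v1: "v \<in> \<Union> (set [tri i q \<union> {p s, p (Suc s)}, k4 i q \<union> {p (Suc s)}])"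
      and v2: "v \<in> \<Union> (set (hb i p (Suc q) (Suc s) (Suc n)))"
    have v2': "v \<in> (\<Union>q'\<in>{Suc q..Suc q+n}. tri i q') \<union> (\<Union>q'\<in>{Suc q..<Suc q+n}. k4 i q') \<union> p ` {Suc s..Suc s + Suc n}"
      using v2 hb_union by metis
    have ps: "p t \<noteq> p s" if "Suc s \<le> t" "t \<le> Suc s + Suc n" for t
      using Suc.prems that unfolding inj_on_def by fastforce
    show "v \<in> last [tri i q \<union> {p s, p (Suc s)}, k4 i q \<union> {p (Suc s)}] \<and> v \<in> hd (hb i p (Suc q) (Suc s) (Suc n))"
    proof -
      have nT: "T a b c \<noteq> p t" "F a b c \<noteq> p t" for t a b c using assms(2,3) by metis+
      show ?thesis unfolding hb_hd using v1 v2' ps assms(2,3) nT by (auto simp: tri_def k4_def)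
    qed
  qed
  then show ?case by simp
qed

fun seg :: "(nat \<Rightarrow> nat) \<Rightarrow> (nat \<Rightarrow> vert) \<Rightarrow> nat list \<Rightarrow> nat \<Rightarrow> vert set list" where
  "seg w p [] s = []"
| "seg w p (i # js) s = hb i p 1 s (w i) @ seg w p js (s + w i)"

lemma hb_ne': "n > 0 \<Longrightarrow> hb i p q s n \<noteq> []"
  using hb_ne by (cases n) auto

lemma seg_ne: "L \<noteq> [] \<Longrightarrow> \<forall>i\<in>set L. w i > 0 \<Longrightarrow> seg w p L s \<noteq> []"
  by (cases L) (auto simp: hb_ne')

lemma seg_hd: "L \<noteq> [] \<Longrightarrow> \<forall>i\<in>set L. w i > 0 \<Longrightarrow> p s \<in> hd (seg w p L s)"
proof (cases L)
  case (Cons i js)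
  assume "\<forall>i\<in>set L. w i > 0"
  then obtain n where n: "w i = Suc n" using Cons gr0_conv_Suc by auto
  show ?thesis using Cons n hb_hd[of i p 1 s n] hb_ne[of i p 1 s n] by simp
qed simp

lemma seg_last: "L \<noteq> [] \<Longrightarrow> \<forall>i\<in>set L. w i > 0 \<Longrightarrow> p (s + sum_list (map w L)) \<in> last (seg w p L s)"
proof (induction L arbitrary: s)
  case (Cons i js)
  then obtain n where n: "w i = Suc n" using gr0_conv_Suc by auto
  show ?case
  proof (cases "js = []")
    case True
    then show ?thesis using n hb_last[of p s n i 1] by simp
  next
    case False
    have "p (s + w i + sum_list (map w js)) \<in> last (seg w p js (s + w i))"
      using Cons.IH[of "s + w i"] False Cons.prems by simp
    then show ?thesis using seg_ne[of "js" w p "s + w i"] False Cons.prems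
      by (simp add: add.assoc)
  qed
qed simp

lemma seg_len: "\<forall>i\<in>set L. w i > 0 \<Longrightarrow> length (seg w p L s) + length L = 2 * sum_list (map w L)"
proof (induction L arbitrary: s)
  case (Cons i js)
  then obtain n where n: "w i = Suc n" using gr0_conv_Suc by auto
  then show ?case using Cons hb_len[of i p 1 s n] by simp
qed simp

lemma hb_union_H: "w i = Suc n \<Longrightarrow> \<Union>(set (hb i p 1 s (w i))) = H_verts w i \<union> p ` {s..s + w i}"
  using hb_union[of i p 1 s n] unfolding H_verts_def by (simp add: atLeastLessThanSuc_atLeastAtMost)

lemma seg_union: "L \<noteq> [] \<Longrightarrow> \<forall>i\<in>set L. w i > 0 \<Longrightarrow>
   \<Union>(set (seg w p L s)) = (\<Union>i\<in>set L. H_verts w i) \<union> p ` {s..s + sum_list (map w L)}"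
proof (induction L arbitrary: s)
  case (Cons i js)
  then obtain n where n: "w i = Suc n" using gr0_conv_Suc by auto
  show ?case
  proof (cases "js = []")
    case True
    then show ?thesis using hb_union_H[of w i n p s] n by simp
  next
    case False
    have iv: "{s..s + w i} \<union> {s + w i..s + w i + sum_list (map w js)} = {s..s + (w i + sum_list (map w js))}" by auto
    have h1: "\<Union>(set (hb i p 1 s (w i))) = H_verts w i \<union> p ` {s..s + w i}"
      using hb_union_H[of w i n p s, OF n] .
    have h2: "\<Union>(set (seg w p js (s + w i))) = (\<Union>i\<in>set js. H_verts w i) \<union> p ` {s + w i..s + w i + sum_list (map w js)}"
      using Cons.IH[of "s + w i"] False Cons.prems by simp
    have "\<Union>(set (seg w p (i # js) s)) = \<Union>(set (hb i p 1 s (w i))) \<union> \<Union>(set (seg w p js (s + w i)))"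
      by simp
    also have "\<dots> = (H_verts w i \<union> (\<Union>i\<in>set js. H_verts w i)) \<union> (p ` {s..s + w i} \<union> p ` {s + w i..s + w i + sum_list (map w js)})"
      unfolding h1 h2 by blast
    also have "\<dots> = (\<Union>i\<in>set (i#js). H_verts w i) \<union> p ` {s..s + sum_list (map w (i#js))}"
      unfolding image_Un[symmetric] iv by simp
    finally show ?thesis .
  qed
qed simp

lemma seg_card: "X \<in> set (seg w p L s) \<Longrightarrow> card X \<le> 5"
  by (induction L arbitrary: s) (auto dest: hb_card)

lemma seg_tri: "i \<in> set L \<Longrightarrow> q \<in> {1..w i} \<Longrightarrow> \<exists>X\<in>set (seg w p L s). tri i q \<subseteq> X"
proof (induction L arbitrary: s)
  case (Cons i' js)
  show ?case
  proof (cases "i' = i")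
    case True
    then obtain n where n: "w i = Suc n" using Cons.prems by (cases "w i") auto
    then show ?thesis using hb_tri[of q 1 n i p s] Cons.prems True by auto
  next
    case False
    then have "i \<in> set js" using Cons.prems by simp
    then obtain X where "X \<in> set (seg w p js (s + w i'))" "tri i q \<subseteq> X" using Cons.IH Cons.prems by blast
    then show ?thesis by auto
  qed
qed simp

lemma seg_k4: "i \<in> set L \<Longrightarrow> q \<in> {1..<w i} \<Longrightarrow> \<exists>X\<in>set (seg w p L s). k4 i q \<subseteq> X"
proof (induction L arbitrary: s)
  case (Cons i' js)
  show ?case
  proof (cases "i' = i")
    case True
    then obtain n where n: "w i = Suc n" using Cons.prems by (cases "w i") auto
    then show ?thesis using hb_k4[of q 1 n i p s] Cons.prems True by auto
  next
    case False
    then have "i \<in> set js" using Cons.prems by simp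
    then obtain X where "X \<in> set (seg w p js (s + w i'))" "k4 i q \<subseteq> X" using Cons.IH Cons.prems by blast
    then show ?thesis by auto
  qed
qed simp

lemma seg_edge: "\<forall>i\<in>set L. w i > 0 \<Longrightarrow> t \<in> {s..<s + sum_list (map w L)} \<Longrightarrow> \<exists>X\<in>set (seg w p L s). {p t, p (Suc t)} \<subseteq> X"
proof (induction L arbitrary: s)
  case (Cons i js)
  then obtain n where n: "w i = Suc n" using gr0_conv_Suc by auto
  show ?case
  proof (cases "t < s + w i")
    case True
    then show ?thesis using hb_edge[of t s n i p 1] n Cons.prems by auto
  next
    case False
    then have "t \<in> {s + w i..<s + w i + sum_list (map w js)}" using Cons.prems by simp
    moreover have "\<forall>i\<in>set js. 0 < w i" using Cons.prems by simp
    ultimately obtain X where "X \<in> set (seg w p js (s + w i))" "{p t, p (Suc t)} \<subseteq> X" using Cons.IH[of "s + w i"] by blast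
    then show ?thesis by auto
  qed
qed simp

lemma H_verts_sub: "x \<in> H_verts w i \<Longrightarrow> (\<exists>q r. x = T i q r) \<or> (\<exists>q r. x = F i q r)"
  unfolding H_verts_def tri_def k4_def by auto

lemma seg_RI:
  assumes "inj_on p {s..s + sum_list (map w L)}" "\<And>t a b c. p t \<noteq> T a b c" "\<And>t a b c. p t \<noteq> F a b c"
    and "distinct L" "L \<noteq> []" "\<forall>i\<in>set L. w i > 0"
  shows "RI (seg w p L s)"
  using assms(1,4,5,6)
proof (induction L arbitrary: s)
  case (Cons i js)
  then obtain n where n: "w i = Suc n" using gr0_conv_Suc by auto
  have inj1: "inj_on p {s..s + Suc n}" by (rule inj_on_subset[OF Cons.prems(1)]) (auto simp: n)
  have RI1: "RI (hb i p 1 s (w i))" unfolding n by (rule hb_RI[OF inj1 assms(2,3)])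
  show ?case
  proof (cases "js = []")
    case True
    then show ?thesis using RI1 by simp
  next
    case False
    have inj2: "inj_on p {s + w i..s + w i + sum_list (map w js)}" using Cons.prems(1) by (rule inj_on_subset) auto
    have RI2: "RI (seg w p js (s + w i))" using Cons.IH[OF inj2] Cons.prems False by simp
    have "RI (hb i p 1 s (w i) @ seg w p js (s + w i))"
    proof (rule RI_append[OF RI1 RI2])
      show "hb i p 1 s (w i) \<noteq> []" using n hb_ne by simp
      show "seg w p js (s + w i) \<noteq> []" using seg_ne False Cons.prems by simp
    next
      fix v assume v1: "v \<in> \<Union>(set (hb i p 1 s (w i)))" and v2: "v \<in> \<Union>(set (seg w p js (s + w i)))"
      have v1': "v \<in> H_verts w i \<union> p ` {s..s + w i}" using v1 hb_union_H[of w i n p s, OF n] by blast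
      have v2': "v \<in> (\<Union>i\<in>set js. H_verts w i) \<union> p ` {s + w i..s + w i + sum_list (map w js)}"
        using v2 seg_union[of "js" w p "s + w i"] False Cons.prems by simp
      have iis: "i \<notin> set js" using Cons.prems by simp
      have "v = p (s + w i)"
      proof -
        { assume "v \<in> H_verts w i"
          then have False using v2' iis assms(2,3) by (auto dest!: H_verts_sub) }
        moreover
        { fix t assume t: "t \<in> {s..s + w i}" "v = p t"
          have "v \<notin> (\<Union>i\<in>set js. H_verts w i)" using t assms(2,3) by (auto dest!: H_verts_sub)
          then obtain t' where t': "t' \<in> {s + w i..s + w i + sum_list (map w js)}" "v = p t'" using v2' by auto
          have "t = t'" using Cons.prems(1) t t' unfolding inj_on_def by auto
          then have "v = p (s + w i)" using t t' by auto }
        ultimately show ?thesis using v1' by auto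
      qed
      then show "v \<in> last (hb i p 1 s (w i)) \<and> v \<in> hd (seg w p js (s + w i))"
        using hb_last[of p s n i 1] n seg_hd[of "js" w p "s + w i"] False Cons.prems by simp
    qed
    then show ?thesis by simp
  qed
qed simp

fun full :: "nat \<Rightarrow> (nat \<Rightarrow> nat) \<Rightarrow> (nat \<Rightarrow> nat list) \<Rightarrow> nat \<Rightarrow> vert set list" where
  "full B w L 0 = [k5 1]"
| "full B w L (Suc j) = full B w L j @ (seg w (pathv B (Suc j)) (L (Suc j)) 0 @ [k5 (Suc (Suc j))])"

lemma full_ne: "full B w L j \<noteq> []" by (cases j) auto
lemma full_last: "last (full B w L j) = k5 (Suc j)" by (cases j) auto

lemma full_mono: "j \<le> j' \<Longrightarrow> set (full B w L j) \<subseteq> set (full B w L j')"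
proof (induction j' arbitrary: j)
  case 0 then show ?case by simp
next
  case (Suc j')
  show ?case
  proof (cases "j = Suc j'")
    case False
    then have "j \<le> j'" using Suc.prems by simp
    then have "set (full B w L j) \<subseteq> set (full B w L j')" using Suc.IH by blast
    moreover have "set (full B w L j') \<subseteq> set (full B w L (Suc j'))" by auto
    ultimately show ?thesis by blast
  qed simp
qed

lemma full_seg: "set (seg w (pathv B (Suc j)) (L (Suc j)) 0) \<subseteq> set (full B w L (Suc j))" by auto
lemma full_k5: "k5 (Suc j) \<in> set (full B w L j)" by (cases j) auto

lemma full_card: "X \<in> set (full B w L j) \<Longrightarrow> card X \<le> 5"
proof (induction j)
  case 0
  have "k5 1 = C 1 ` {..<5}" unfolding k5_def by auto
  then have "card (k5 1) \<le> 5" using card_image_le[of "{..<5::nat}" "C 1"] by simp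
  then show ?case using 0 by simp
next
  case (Suc j)
  have "card (k5 (Suc (Suc j))) \<le> 5"
  proof -
    have "k5 (Suc (Suc j)) = C (Suc (Suc j)) ` {..<5}" unfolding k5_def by auto
    then show ?thesis using card_image_le[of "{..<5::nat}" "C (Suc (Suc j))"] by simp
  qed
  then show ?case using Suc seg_card by auto
qed

lemma sum_list_pos: "L \<noteq> [] \<Longrightarrow> \<forall>i\<in>set L. (w::nat\<Rightarrow>nat) i > 0 \<Longrightarrow> sum_list (map w L) > 0"
  by (cases L) auto

lemma full_len:
  assumes hL: "\<And>j. j \<in> {1..m} \<Longrightarrow> L j \<noteq> [] \<and> distinct (L j) \<and> (\<forall>i\<in>set (L j). w i > 0) \<and> sum_list (map w (L j)) = B"
  shows "j \<le> m \<Longrightarrow> length (full B w L j) + (\<Sum>j'\<in>{1..j}. length (L j')) = 1 + j * (2 * B + 1)"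
proof (induction j)
  case 0 then show ?case by simp
next
  case (Suc j)
  have h: "L (Suc j) \<noteq> [] \<and> distinct (L (Suc j)) \<and> (\<forall>i\<in>set (L (Suc j)). w i > 0) \<and> sum_list (map w (L (Suc j))) = B"
    using hL[of "Suc j"] Suc.prems by simp
  have "length (seg w (pathv B (Suc j)) (L (Suc j)) 0) + length (L (Suc j)) = 2 * B"
    using seg_len h by metis
  then show ?case using Suc by simp
qed

lemma pathv_C: "pathv B j t = C a k \<Longrightarrow> (t = 0 \<and> a = j \<and> k = 1) \<or> (t \<noteq> 0 \<and> t = B \<and> a = Suc j \<and> k = 0)"
  unfolding pathv_def by (auto split: if_splits)
lemma pathv_P: "pathv B j t = P a u \<Longrightarrow> a = j"
  unfolding pathv_def by (auto split: if_splits)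
lemma pathv_T: "pathv B j t \<noteq> T a b c" unfolding pathv_def by auto
lemma pathv_F: "pathv B j t \<noteq> F a b c" unfolding pathv_def by auto
lemma pathv_T2[simp]: "T a b c \<noteq> pathv B j t" unfolding pathv_def by auto
lemma pathv_F2[simp]: "F a b c \<noteq> pathv B j t" unfolding pathv_def by auto
declare pathv_T[simp] pathv_F[simp]
lemma pathv_inj: "1 \<le> B \<Longrightarrow> inj_on (pathv B j) {0..B}"
  unfolding inj_on_def pathv_def by auto
lemma k5_C: "x \<in> k5 j \<Longrightarrow> \<exists>k. x = C j k" unfolding k5_def by auto
lemma pathv_kinds: "pathv B j t = C j 1 \<or> pathv B j t = C (Suc j) 0 \<or> pathv B j t = P j t"
  unfolding pathv_def by auto

lemma full_union:
  assumes hL: "\<And>j. j \<in> {1..m} \<Longrightarrow> L j \<noteq> [] \<and> distinct (L j) \<and> (\<forall>i\<in>set (L j). w i > 0) \<and> sum_list (map w (L j)) = B"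
  shows "j \<le> m \<Longrightarrow> \<Union>(set (full B w L j)) = (\<Union>j'\<in>{1..j}. \<Union>i\<in>set (L j'). H_verts w i) \<union> (\<Union>j'\<in>{1..Suc j}. k5 j') \<union> (\<Union>j'\<in>{1..j}. path_verts B j')"
proof (induction j)
  case 0 then show ?case by simp
next
  case (Suc j)
  have h: "L (Suc j) \<noteq> [] \<and> distinct (L (Suc j)) \<and> (\<forall>i\<in>set (L (Suc j)). w i > 0) \<and> sum_list (map w (L (Suc j))) = B"
    using hL[of "Suc j"] Suc.prems by simp
  have su: "\<Union>(set (seg w (pathv B (Suc j)) (L (Suc j)) 0)) = (\<Union>i\<in>set (L (Suc j)). H_verts w i) \<union> path_verts B (Suc j)"
    using seg_union[of "L (Suc j)" w "pathv B (Suc j)" 0] h unfolding path_verts_def by simp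
  have IH: "\<Union>(set (full B w L j)) = (\<Union>j'\<in>{1..j}. \<Union>i\<in>set (L j'). H_verts w i) \<union> (\<Union>j'\<in>{1..Suc j}. k5 j') \<union> (\<Union>j'\<in>{1..j}. path_verts B j')"
    using Suc by simp
  have e1: "{1..Suc j} = insert (Suc j) {1..j}" by auto
  have e2: "{1..Suc (Suc j)} = insert (Suc (Suc j)) {1..Suc j}" by auto
  have "\<Union>(set (full B w L (Suc j))) = \<Union>(set (full B w L j)) \<union> \<Union>(set (seg w (pathv B (Suc j)) (L (Suc j)) 0)) \<union> k5 (Suc (Suc j))"
    by (simp add: Un_ac)
  also have "\<dots> = (\<Union>j'\<in>{1..Suc j}. \<Union>i\<in>set (L j'). H_verts w i) \<union> (\<Union>j'\<in>{1..Suc (Suc j)}. k5 j') \<union> (\<Union>j'\<in>{1..Suc j}. path_verts B j')"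
    unfolding IH su e2 unfolding e1 by auto
  finally show ?case .
qed

lemma full_RI:
  assumes hL: "\<And>j. j \<in> {1..m} \<Longrightarrow> L j \<noteq> [] \<and> distinct (L j) \<and> (\<forall>i\<in>set (L j). w i > 0) \<and> sum_list (map w (L j)) = B"
    and disj: "\<And>j j'. j \<in> {1..m} \<Longrightarrow> j' \<in> {1..m} \<Longrightarrow> j \<noteq> j' \<Longrightarrow> set (L j) \<inter> set (L j') = {}"
  shows "j \<le> m \<Longrightarrow> RI (full B w L j)"
proof (induction j)
  case 0 then show ?case by (simp add: RI_le2)
next
  case (Suc j)
  let ?p = "pathv B (Suc j)"
  let ?S = "seg w ?p (L (Suc j)) 0"
  have h: "L (Suc j) \<noteq> [] \<and> distinct (L (Suc j)) \<and> (\<forall>i\<in>set (L (Suc j)). w i > 0) \<and> sum_list (map w (L (Suc j))) = B"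
    using hL[of "Suc j"] Suc.prems by simp
  then have B1: "1 \<le> B" using sum_list_pos[of "L (Suc j)" w] by simp
  have su: "\<Union>(set ?S) = (\<Union>i\<in>set (L (Suc j)). H_verts w i) \<union> ?p ` {0..B}"
    using seg_union[of "L (Suc j)" w ?p 0] h by simp
  have Sne: "?S \<noteq> []" using seg_ne h by blast
  have RIS: "RI ?S"
    using seg_RI[of ?p 0 w "L (Suc j)"] h pathv_inj[OF B1] pathv_T pathv_F by simp
  have RI2: "RI (?S @ [k5 (Suc (Suc j))])"
  proof (rule RI_append[OF RIS RI_le2 Sne])
    show "length [k5 (Suc (Suc j))] \<le> 2" by simp
    show "[k5 (Suc (Suc j))] \<noteq> []" by simp
  next
    fix v assume v1: "v \<in> \<Union>(set ?S)" and v2: "v \<in> \<Union>(set [k5 (Suc (Suc j))])"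
    from v2 obtain k where vk: "v = C (Suc (Suc j)) k" using k5_C by auto
    from v1 su vk have "v \<in> ?p ` {0..B}" by (auto dest!: H_verts_sub)
    then obtain t where t: "t \<in> {0..B}" "v = ?p t" by auto
    then have "t = B" using vk pathv_C[of B "Suc j" t "Suc (Suc j)" k] by auto
    then have "v \<in> last ?S" using t seg_last[of "L (Suc j)" w ?p 0] h by simp
    then show "v \<in> last ?S \<and> v \<in> hd [k5 (Suc (Suc j))]" using v2 by simp
  qed
  have jm: "j \<le> m" using Suc.prems by simp
  have RIF: "RI (full B w L j)" using Suc by simp
  have "RI (full B w L j @ (?S @ [k5 (Suc (Suc j))]))"
  proof (rule RI_append[OF RIF RI2 full_ne])
    show "?S @ [k5 (Suc (Suc j))] \<noteq> []" by simp
  next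
    fix v assume v1: "v \<in> \<Union>(set (full B w L j))" and v2: "v \<in> \<Union>(set (?S @ [k5 (Suc (Suc j))]))"
    have v1': "v \<in> (\<Union>j'\<in>{1..j}. \<Union>i\<in>set (L j'). H_verts w i) \<union> (\<Union>j'\<in>{1..Suc j}. k5 j') \<union> (\<Union>j'\<in>{1..j}. path_verts B j')"
    proof -
      have fu: "\<Union>(set (full B w L j)) = (\<Union>j'\<in>{1..j}. \<Union>i\<in>set (L j'). H_verts w i) \<union> (\<Union>j'\<in>{1..Suc j}. k5 j') \<union> (\<Union>j'\<in>{1..j}. path_verts B j')"
        using full_union[where m=m, OF hL jm] .
      show ?thesis using v1 unfolding fu .
    qed
    have v2': "v \<in> (\<Union>i\<in>set (L (Suc j)). H_verts w i) \<union> ?p ` {0..B} \<union> k5 (Suc (Suc j))"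
      using v2 su by auto
    have "v = C (Suc j) 1"
    proof -
      { fix j' i assume j': "j' \<in> {1..j}" and i: "i \<in> set (L j')" and vH: "v \<in> H_verts w i"
        have "i \<notin> set (L (Suc j))" using disj[of j' "Suc j"] j' Suc.prems i by auto
        then have False using v2' vH pathv_T pathv_F by (auto dest!: H_verts_sub k5_C) }
      moreover
      { fix j' assume j': "j' \<in> {1..Suc j}" and vk: "v \<in> k5 j'"
        then obtain k where k: "v = C j' k" using k5_C by blast
        have ?thesis
        proof -
          { fix i assume "v \<in> H_verts w i" then have False using k by (auto dest!: H_verts_sub) }
          moreover
          { fix t assume "v = ?p t"
            then have ?thesis using k j' pathv_C[of B "Suc j" t j' k] by auto }
          moreover
          { assume "v \<in> k5 (Suc (Suc j))" then have False using k j' by (auto dest!: k5_C) }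
          ultimately show ?thesis using v2' by blast
        qed }
      moreover
      { fix j' assume j': "j' \<in> {1..j}" and vp: "v \<in> path_verts B j'"
        then obtain t where t: "v = pathv B j' t" unfolding path_verts_def by auto
        { fix i assume "v \<in> H_verts w i" then have False using t pathv_T pathv_F by (auto dest!: H_verts_sub) }
        moreover
        { fix t' assume t': "v = ?p t'"
          have False using pathv_kinds[of B j' t] pathv_kinds[of B "Suc j" t'] t t' j' by auto }
        moreover
        { assume "v \<in> k5 (Suc (Suc j))"
          then obtain k where "v = C (Suc (Suc j)) k" using k5_C by blast
          then have False using pathv_kinds[of B j' t] t j' by auto }
        ultimately have False using v2' by blast }
      ultimately show ?thesis using v1' by blast
    qed
    moreover have "C (Suc j) 1 \<in> hd ?S" using seg_hd[of "L (Suc j)" w ?p 0] h by (simp add: pathv_def)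
    moreover have "C (Suc j) 1 \<in> last (full B w L j)" unfolding full_last k5_def by auto
    ultimately show "v \<in> last (full B w L j) \<and> v \<in> hd (?S @ [k5 (Suc (Suc j))])"
      using Sne by simp
  qed
  then show ?case by simp
qed

lemma clique_sub: "e \<in> clique_edges K \<Longrightarrow> e \<subseteq> K" unfolding clique_edges_def by auto

theorem mainTheorem9:
  fixes m :: nat and w :: "nat \<Rightarrow> nat" and b :: int and Sp :: "nat \<Rightarrow> nat set"
  assumes wpos: "\<forall>i\<in>{1..3*m}. w i > 0"
    and part_disj: "\<forall>j\<in>{1..m}. \<forall>k\<in>{1..m}. j \<noteq> k \<longrightarrow> Sp j \<inter> Sp k = {}"
    and part_cover: "(\<Union>j\<in>{1..m}. Sp j) = {1..3*m}"
    and part_sum: "\<forall>j\<in>{1..m}. (\<Sum>i\<in>Sp j. int (w i)) = b"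
  shows "\<exists>Xs. is_path_decomposition (G_verts m w b) (G_edges m w b) Xs \<and>
              pd_width Xs \<le> 4 \<and>
              int (length Xs) \<le> 1 - 2 * int m + 2 * (\<Sum>i\<in>{1..3*m}. int (w i))"
proof -
  define B where "B = nat b"
  define L where "L = (\<lambda>j. sorted_list_of_set (Sp j))"
  have Sp_sub: "Sp j \<subseteq> {1..3*m}" if "j \<in> {1..m}" for j using part_cover that by blast
  have fin: "finite (Sp j)" if "j \<in> {1..m}" for j using Sp_sub[OF that] finite_subset by blast
  have setL: "set (L j) = Sp j" "distinct (L j)" if "j \<in> {1..m}" for j
    using fin[OF that] unfolding L_def by auto
  have wpos': "\<forall>i\<in>Sp j. w i > 0" if "j \<in> {1..m}" for j using Sp_sub[OF that] wpos by blast
  have sumL: "int (sum_list (map w (L j))) = b" if "j \<in> {1..m}" for j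
  proof -
    have "sum_list (map w (L j)) = sum w (Sp j)"
      using sum_list_distinct_conv_sum_set[OF setL(2)[OF that], of w] setL(1)[OF that] by simp
    then show ?thesis using part_sum that by (simp add: of_nat_sum)
  qed
  have bpos: "b > 0" if "m > 0"
  proof -
    have "1 \<in> {1..3*m}" using that by simp
    then obtain j where j: "j \<in> {1..m}" "1 \<in> Sp j" using part_cover by blast
    have "int (w 1) \<le> (\<Sum>i\<in>Sp j. int (w i))"
      by (rule member_le_sum) (use j fin in auto)
    moreover have "w 1 > 0" using wpos that by simp
    ultimately show ?thesis using part_sum j by auto
  qed
  have hL: "L j \<noteq> [] \<and> distinct (L j) \<and> (\<forall>i\<in>set (L j). w i > 0) \<and> sum_list (map w (L j)) = B"
    if "j \<in> {1..m}" for j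
  proof -
    have "m > 0" using that by simp
    then have "b > 0" by (rule bpos)
    then have "L j \<noteq> []" using sumL[OF that] by (cases "L j") auto
    moreover have "sum_list (map w (L j)) = B" using sumL[OF that] unfolding B_def by simp
    ultimately show ?thesis using setL[OF that] wpos'[OF that] by simp
  qed
  have disj: "set (L j) \<inter> set (L j') = {}" if "j \<in> {1..m}" "j' \<in> {1..m}" "j \<noteq> j'" for j j'
    using part_disj that setL by auto
  define Xs where "Xs = full B w L m"
  have U: "\<Union>(set Xs) = G_verts m w b"
  proof -
    have "\<Union>(set Xs) = (\<Union>j'\<in>{1..m}. \<Union>i\<in>set (L j'). H_verts w i) \<union> (\<Union>j'\<in>{1..Suc m}. k5 j') \<union> (\<Union>j'\<in>{1..m}. path_verts B j')"
      unfolding Xs_def by (rule full_union[where m=m, OF hL]) auto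
    also have "(\<Union>j'\<in>{1..m}. \<Union>i\<in>set (L j'). H_verts w i) = (\<Union>i\<in>(\<Union>j\<in>{1..m}. Sp j). H_verts w i)"
      using setL by auto
    also have "\<dots> = (\<Union>i\<in>{1..3*m}. H_verts w i)" unfolding part_cover ..
    finally show ?thesis unfolding G_verts_def Hmb_verts_def B_def by (simp add: Un_assoc)
  qed
  have inF: "X \<in> set Xs" if jm: "j \<in> {1..m}" and jX: "X \<in> set (seg w (pathv B j) (L j) 0)" for j X
  proof -
    obtain j0 where j0: "j = Suc j0" using jm by (cases j) auto
    have "X \<in> set (full B w L j)" using full_seg[of w B j0 L] jX j0 by auto
    then show ?thesis using full_mono[of j m B w L] jm unfolding Xs_def by auto
  qed
  have edges: "\<exists>X\<in>set Xs. e \<subseteq> X" if "e \<in> G_edges m w b" for e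
  proof -
    have "e \<in> (\<Union>i\<in>{1..3*m}. H_edges w i) \<or> e \<in> Hmb_edges m B"
      using that unfolding G_edges_def B_def by blast
    then consider
        (tr) i q where "i \<in> {1..3*m}" "q \<in> {1..w i}" "e \<in> clique_edges (tri i q)"
      | (k4) i q where "i \<in> {1..3*m}" "q \<in> {1..<w i}" "e \<in> clique_edges (k4 i q)"
      | (k5) j where "j \<in> {1..m+1}" "e \<in> clique_edges (k5 j)"
      | (pe) j where "j \<in> {1..m}" "e \<in> path_edges B j"
    proof (elim disjE)
      assume "e \<in> (\<Union>i\<in>{1..3*m}. H_edges w i)"
      then obtain i where i: "i \<in> {1..3*m}" "e \<in> H_edges w i" by blast
      then have "e \<in> (\<Union>q\<in>{1..w i}. clique_edges (tri i q)) \<or> e \<in> (\<Union>q\<in>{1..<w i}. clique_edges (k4 i q))"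
        unfolding H_edges_def by blast
      then show thesis using i that(1,2) by blast
    next
      assume "e \<in> Hmb_edges m B"
      then have "e \<in> (\<Union>j\<in>{1..m+1}. clique_edges (k5 j)) \<or> e \<in> (\<Union>j\<in>{1..m}. path_edges B j)"
        unfolding Hmb_edges_def by blast
      then show thesis using that(3,4) by blast
    qed
    then show ?thesis
    proof cases
      case tr
      then obtain j where j: "j \<in> {1..m}" "i \<in> Sp j" using part_cover by blast
      have "i \<in> set (L j)" using setL(1)[OF j(1)] j(2) by simp
      then obtain X where X: "X \<in> set (seg w (pathv B j) (L j) 0)" "tri i q \<subseteq> X"
        using seg_tri[of i "L j" q w "pathv B j" 0] tr(2) by blast
      have "X \<in> set Xs" by (rule inF[OF j(1) X(1)])
      moreover have "e \<subseteq> X" using clique_sub[OF tr(3)] X(2) by blast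
      ultimately show ?thesis by blast
    next
      case k4
      then obtain j where j: "j \<in> {1..m}" "i \<in> Sp j" using part_cover by blast
      have "i \<in> set (L j)" using setL(1)[OF j(1)] j(2) by simp
      then obtain X where X: "X \<in> set (seg w (pathv B j) (L j) 0)" "k4 i q \<subseteq> X"
        using seg_k4[of i "L j" q w "pathv B j" 0] k4(2) by blast
      have "X \<in> set Xs" by (rule inF[OF j(1) X(1)])
      moreover have "e \<subseteq> X" using clique_sub[OF k4(3)] X(2) by blast
      ultimately show ?thesis by blast
    next
      case k5
      then obtain j0 where j0: "j = Suc j0" "j0 \<le> m" by (cases j) auto
      have "k5 j \<in> set Xs" using full_k5[of j0 B w L] full_mono[of j0 m B w L] j0 unfolding Xs_def by auto
      moreover have "e \<subseteq> k5 j" using clique_sub[OF k5(2)] .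
      ultimately show ?thesis by blast
    next
      case pe
      then obtain t where t: "t < B" "e = {pathv B j t, pathv B j (Suc t)}" unfolding path_edges_def by auto
      have "t \<in> {0..<0 + sum_list (map w (L j))}" using hL[OF pe(1)] t by simp
      then obtain X where X: "X \<in> set (seg w (pathv B j) (L j) 0)" "{pathv B j t, pathv B j (Suc t)} \<subseteq> X"
        using seg_edge[of "L j" w t 0 "pathv B j"] hL[OF pe(1)] by blast
      have "X \<in> set Xs" by (rule inF[OF pe(1) X(1)])
      then show ?thesis using X(2) t(2) by blast
    qed
  qed
  have RIX: "RI Xs" unfolding Xs_def by (rule full_RI[where m=m, OF hL disj]) auto
  have pd: "is_path_decomposition (G_verts m w b) (G_edges m w b) Xs"
    unfolding is_path_decomposition_def using U edges RIX unfolding RI_def by blast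
  have wd: "pd_width Xs \<le> 4"
  proof -
    have "(MAX X\<in>set Xs. int (card X)) \<le> 5"
      using full_card[of _ B w L m] full_ne[of B w L m] unfolding Xs_def by (simp add: Max_le_iff)
    then show ?thesis unfolding pd_width_def by simp
  qed
  have len1: "length Xs + (\<Sum>j'\<in>{1..m}. length (L j')) = 1 + m * (2 * B + 1)"
    unfolding Xs_def by (rule full_len[where m=m, OF hL]) auto
  have card3: "(\<Sum>j'\<in>{1..m}. length (L j')) = 3 * m"
  proof -
    have "(\<Sum>j'\<in>{1..m}. length (L j')) = (\<Sum>j'\<in>{1..m}. card (Sp j'))"
      by (rule sum.cong) (use setL in \<open>auto simp: distinct_card[symmetric]\<close>)
    also have "\<dots> = card (\<Union>j\<in>{1..m}. Sp j)"
      by (rule card_UN_disjoint[symmetric]) (use fin part_disj in auto)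
    finally show ?thesis unfolding part_cover by simp
  qed
  have wsum: "(\<Sum>i\<in>{1..3*m}. int (w i)) = int m * b"
  proof -
    have "(\<Sum>i\<in>{1..3*m}. int (w i)) = (\<Sum>i\<in>(\<Union>j\<in>{1..m}. Sp j). int (w i))" unfolding part_cover ..
    also have "\<dots> = (\<Sum>j\<in>{1..m}. \<Sum>i\<in>Sp j. int (w i))"
      by (rule sum.UNION_disjoint) (use fin part_disj in auto)
    also have "\<dots> = (\<Sum>j\<in>{1..m}. b)" using part_sum by simp
    finally show ?thesis by simp
  qed
  have Bb: "int m * int B = int m * b"
  proof (cases "m = 0")
    case False
    then have "b > 0" using bpos by simp
    then show ?thesis unfolding B_def by simp
  qed simp
  have "length Xs + 3 * m = 1 + m * (2 * B + 1)" using len1 card3 by simp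
  then have "int (length Xs + 3 * m) = int (1 + m * (2 * B + 1))" by (rule arg_cong)
  then have "int (length Xs) = 1 + int m * (2 * int B + 1) - 3 * int m" by (simp add: algebra_simps)
  then have "int (length Xs) = 1 - 2 * int m + 2 * (int m * int B)" by (simp add: algebra_simps)
  then have "int (length Xs) \<le> 1 - 2 * int m + 2 * (\<Sum>i\<in>{1..3*m}. int (w i))"
    unfolding wsum Bb[symmetric] by linarith
  then show ?thesis using pd wd by blast
qed

end
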